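(* Let $X_1,\dots,X_n$ be independent random vectors in $\mathbb{R}^d$, $\lambda>0$, $\tilde X_i=\mathrm{clip}(X_i,\lambda)$ and $\tilde X=\frac1n\sum_{i=1}^n\tilde X_i$. Then $\|\tilde X-\mathbb{E}[\tilde X]\|\le2\lambda$. Moreover, if for some $\sigma\ge0$ and $\alpha\in(1,2]$ we have $\mathbb{E}[X_i]=x_i\in\mathbb{R}^d$, $\mathbb{E}[\|X_i-x_i\|^\alpha]\le\sigma^\alpha$ and $\|x_i\|\le\lambda/2$ for all $i\in[n]$, then with $x=\frac1n\sum_{i=1}^nx_i$, $$\|\mathbb{E}[\tilde X]-x\|\le\frac{2^\alpha\sigma^\alpha}{\lambda^{\alpha-1}},\qquad\mathbb{E}\left[\|\tilde X-\mathbb{E}[\tilde X]\|^2\right]\le\frac{18\lambda^{2-\alpha}\sigma^\alpha}{n}.$$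
   Context: $\mathrm{clip}(y,\lambda)=\min\{1,\lambda/\|y\|\}y$ for $y\ne0$ and $\mathrm{clip}(0,\lambda)=0$. *)

theory Defs
  imports "HOL-Probability.Probability"
begin

definition clip :: "'a::real_normed_vector \<Rightarrow> real \<Rightarrow> 'a" where
  "clip y lam = (if y = 0 then 0 else min 1 (lam / norm y) *\<^sub>R y)"

end

theory Submission
  imports Defs
begin

lemma clip_meas: "(\<lambda>y::'b::euclidean_space. clip y lam) \<in> borel_measurable borel"
  unfolding clip_def by measurable

lemma clip_norm: "lam > 0 \<Longrightarrow> norm (clip y lam) \<le> lam"
  unfolding clip_def
proof (cases "y = 0")
  case False
  assume l: "lam > 0"
  have "norm (min 1 (lam / norm y) *\<^sub>R y) = min 1 (lam / norm y) * norm y"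
    using l False by simp
  also have "\<dots> \<le> lam" using l False
    by (cases "lam / norm y \<le> 1") (auto simp: min_def field_simps)
  finally show "norm (if y = 0 then 0 else min 1 (lam / norm y) *\<^sub>R y) \<le> lam" using False by simp
qed (simp add: less_imp_le)

lemma clip_big: assumes "lam > 0" "norm y > lam"
  shows "norm (clip y lam - y) = norm y - lam"
proof -
  have y: "y \<noteq> 0" using assms by auto
  have e: "clip y lam - y = (lam / norm y - 1) *\<^sub>R y" using assms y
    by (simp add: clip_def min_def algebra_simps)
  have "lam / norm y \<le> 1" using assms by (simp add: divide_le_eq_1)
  then have "norm ((lam / norm y - 1) *\<^sub>R y) = (1 - lam / norm y) * norm y" by simp
  also have "\<dots> = norm y - lam" using y by (simp add: field_simps)
  finally show ?thesis using e by simp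
qed

lemma clip_small: "norm y \<le> lam \<Longrightarrow> clip y lam = y"
  by (auto simp: clip_def min_def field_simps)

lemma clip_bias: assumes l: "lam > 0" and x: "norm x \<le> lam / 2" and a: "1 < \<alpha>"
  shows "norm (clip y lam - y) \<le> (2 / lam) powr (\<alpha> - 1) * norm (y - x) powr \<alpha>"
proof (cases "norm y \<le> lam")
  case True then show ?thesis by (simp add: clip_small)
next
  case False
  have tri: "norm y \<le> norm (y - x) + norm x" by (metis norm_triangle_sub add.commute)
  let ?t = "norm (y - x)"
  have t: "?t > lam / 2" using False tri x by linarith
  have "norm (clip y lam - y) = norm y - lam" by (rule clip_big[OF l]) (use False in linarith)
  then have e: "norm (clip y lam - y) \<le> ?t" using tri x l by linarith
  have eq: "?t = ?t powr \<alpha> * ?t powr (1 - \<alpha>)" using t l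
    by (simp add: powr_add[symmetric])
  have le1: "?t powr (1 - \<alpha>) \<le> (lam / 2) powr (1 - \<alpha>)"
    using t l a by (intro powr_mono2') auto
  have e2: "(lam / 2) powr (1 - \<alpha>) = (2 / lam) powr (\<alpha> - 1)"
  proof -
    have "(lam / 2) powr (1 - \<alpha>) = (lam / 2) powr (- (\<alpha> - 1))" by simp
    also have "\<dots> = 1 / ((lam / 2) powr (\<alpha> - 1))" by (rule powr_minus_divide)
    also have "\<dots> = 1 / (lam powr (\<alpha> - 1) / 2 powr (\<alpha> - 1))" by (simp only: powr_divide)
    also have "\<dots> = 2 powr (\<alpha> - 1) / lam powr (\<alpha> - 1)" by simp
    also have "\<dots> = (2 / lam) powr (\<alpha> - 1)" by (simp only: powr_divide)
    finally show ?thesis .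
  qed
  have "?t \<le> ?t powr \<alpha> * (2 / lam) powr (\<alpha> - 1)"
    using mult_left_mono[OF le1, of "?t powr \<alpha>"] eq e2 by simp
  then show ?thesis using e by (simp add: mult.commute)
qed

lemma clip_sq: assumes l: "lam > 0" and x: "norm x \<le> lam / 2" and a: "1 < \<alpha>" "\<alpha> \<le> 2"
  shows "(norm (clip y lam - x))\<^sup>2 \<le> 6 * lam powr (2 - \<alpha>) * norm (y - x) powr \<alpha>"
proof -
  let ?t = "norm (clip y lam - x)" and ?s = "norm (y - x)"
  have t1: "?t \<le> 3 / 2 * lam" using norm_triangle_ineq4[of "clip y lam" x] clip_norm[OF l, of y] x by linarith
  have t2: "?t \<le> 2 * ?s"
  proof (cases "norm y \<le> lam")
    case True then show ?thesis by (simp add: clip_small)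
  next
    case False
    have tri: "norm y \<le> ?s + norm x" by (metis norm_triangle_sub add.commute)
    have "?t \<le> norm (clip y lam - y) + ?s" using norm_triangle_ineq[of "clip y lam - y" "y - x"] by simp
    moreover have "norm (clip y lam - y) = norm y - lam" by (rule clip_big[OF l]) (use False in linarith)
    ultimately show ?thesis using tri x l by linarith
  qed
  show ?thesis
  proof (cases "?t = 0")
    case True
    then show ?thesis using l by simp
  next
    case False
    then have tp: "?t > 0" by simp
    have "?t powr \<alpha> * ?t powr (2 - \<alpha>) = ?t powr (\<alpha> + (2 - \<alpha>))" by (simp only: powr_add)
    also have "\<dots> = ?t powr 2" by simp
    also have "\<dots> = ?t\<^sup>2" using tp by (simp add: powr_numeral)
    finally have "?t\<^sup>2 = ?t powr \<alpha> * ?t powr (2 - \<alpha>)" by simp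
    also have "\<dots> \<le> (2 * ?s) powr \<alpha> * (3 / 2 * lam) powr (2 - \<alpha>)"
    proof (rule mult_mono)
      show "?t powr \<alpha> \<le> (2 * ?s) powr \<alpha>" using t2 a by (intro powr_mono2) auto
      show "?t powr (2 - \<alpha>) \<le> (3 / 2 * lam) powr (2 - \<alpha>)" using t1 a by (intro powr_mono2) auto
    qed auto
    also have "\<dots> = 2 powr \<alpha> * (3/2) powr (2 - \<alpha>) * (lam powr (2 - \<alpha>) * ?s powr \<alpha>)"
    proof -
      have "(2 * ?s) powr \<alpha> = 2 powr \<alpha> * ?s powr \<alpha>" by (simp add: powr_mult)
      moreover have "(3/2 * lam) powr (2 - \<alpha>) = (3/2) powr (2 - \<alpha>) * lam powr (2 - \<alpha>)"
        using l powr_mult[of "3/2" lam "2 - \<alpha>"] by simp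
      ultimately show ?thesis by (simp only: ac_simps)
    qed
    also have "\<dots> \<le> 6 * (lam powr (2 - \<alpha>) * ?s powr \<alpha>)"
    proof (rule mult_right_mono)
      have "2 powr \<alpha> \<le> 2 powr 2" using a by (intro powr_mono) auto
      moreover have "(3/2::real) powr (2 - \<alpha>) \<le> (3/2) powr 1" using a by (intro powr_mono) auto
      ultimately have "2 powr \<alpha> * (3/2::real) powr (2 - \<alpha>) \<le> 2 powr 2 * (3/2) powr 1"
        by (intro mult_mono) auto
      then show "2 powr \<alpha> * (3/2::real) powr (2 - \<alpha>) \<le> 6" by simp
    qed simp
    finally show ?thesis by simp
  qed
qed



lemma (in prob_space) indep_sum_sq:
  fixes Z :: "nat \<Rightarrow> 'a \<Rightarrow> 'b::euclidean_space"
  assumes fin: "finite I" and ind: "indep_vars (\<lambda>_. borel) Z I"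
    and bnd: "\<And>i \<omega>. i \<in> I \<Longrightarrow> \<omega> \<in> space M \<Longrightarrow> norm (Z i \<omega>) \<le> B"
    and mean: "\<And>i. i \<in> I \<Longrightarrow> expectation (Z i) = 0"
  shows "expectation (\<lambda>\<omega>. (norm (\<Sum>i\<in>I. Z i \<omega>))\<^sup>2) = (\<Sum>i\<in>I. expectation (\<lambda>\<omega>. (norm (Z i \<omega>))\<^sup>2))"
proof -
  have meas[measurable]: "Z i \<in> borel_measurable M" if "i \<in> I" for i
    using ind that unfolding indep_vars_def by auto
  have B: "0 \<le> B" if "i \<in> I" "\<omega> \<in> space M" for i \<omega> using bnd[OF that] norm_ge_zero order_trans by blast
  have intZ: "integrable M (Z i)" if "i \<in> I" for i
    by (rule integrable_const_bound[where B=B]) (use bnd that in auto)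
  have intZZ: "integrable M (\<lambda>\<omega>. Z i \<omega> \<bullet> Z j \<omega>)" if "i \<in> I" "j \<in> I" for i j
  proof (rule integrable_const_bound[where B="B * B"])
    show "AE \<omega> in M. norm (Z i \<omega> \<bullet> Z j \<omega>) \<le> B * B"
    proof (rule AE_I2)
      fix \<omega> assume w: "\<omega> \<in> space M"
      have "norm (Z i \<omega> \<bullet> Z j \<omega>) \<le> norm (Z i \<omega>) * norm (Z j \<omega>)"
        by (simp add: Cauchy_Schwarz_ineq2)
      also have "\<dots> \<le> B * B" using bnd[OF that(1) w] bnd[OF that(2) w]
        using B[OF that(1) w] by (intro mult_mono) auto
      finally show "norm (Z i \<omega> \<bullet> Z j \<omega>) \<le> B * B" .
    qed
  qed (use that in measurable)
  have cross: "expectation (\<lambda>\<omega>. Z i \<omega> \<bullet> Z j \<omega>) = 0" if ij: "i \<in> I" "j \<in> I" "i \<noteq> j" for i j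
  proof -
    have "expectation (\<lambda>\<omega>. Z i \<omega> \<bullet> Z j \<omega>) = expectation (\<lambda>\<omega>. \<Sum>b\<in>Basis. (Z i \<omega> \<bullet> b) * (Z j \<omega> \<bullet> b))"
      by (rule arg_cong[where f="integral\<^sup>L M"], rule ext, rule euclidean_inner)
    also have "\<dots> = (\<Sum>b\<in>Basis. expectation (\<lambda>\<omega>. (Z i \<omega> \<bullet> b) * (Z j \<omega> \<bullet> b)))"
    proof (rule Bochner_Integration.integral_sum)
      fix b :: 'b assume b: "b \<in> Basis"
      show "integrable M (\<lambda>\<omega>. (Z i \<omega> \<bullet> b) * (Z j \<omega> \<bullet> b))"
      proof (rule integrable_const_bound[where B="B * B"])
        show "AE \<omega> in M. norm ((Z i \<omega> \<bullet> b) * (Z j \<omega> \<bullet> b)) \<le> B * B"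
        proof (rule AE_I2)
          fix \<omega> assume w: "\<omega> \<in> space M"
          have "\<bar>Z i \<omega> \<bullet> b\<bar> \<le> B" using bnd[OF ij(1) w] Basis_le_norm[OF b, of "Z i \<omega>"] by linarith
          moreover have "\<bar>Z j \<omega> \<bullet> b\<bar> \<le> B" using bnd[OF ij(2) w] Basis_le_norm[OF b, of "Z j \<omega>"] by linarith
          ultimately show "norm ((Z i \<omega> \<bullet> b) * (Z j \<omega> \<bullet> b)) \<le> B * B"
            by (simp add: abs_mult mult_mono)
        qed
      qed (use ij in measurable)
    qed
    also have "\<dots> = 0"
    proof (rule sum.neutral, rule ballI)
      fix b :: 'b assume b: "b \<in> Basis"
      define W where "W k \<omega> = Z k \<omega> \<bullet> b" for k \<omega>
      have indW: "indep_vars (\<lambda>_. borel) W {i, j}"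
        unfolding W_def
        by (rule indep_vars_compose2[where Y="\<lambda>_ v. v \<bullet> b" and X=Z and N="\<lambda>_. borel", OF indep_vars_subset[OF ind]])
           (use ij in auto)
      have intW: "integrable M (W k)" if "k \<in> {i, j}" for k
        unfolding W_def using intZ that ij by auto
      have "expectation (\<lambda>\<omega>. \<Prod>k\<in>{i,j}. W k \<omega>) = (\<Prod>k\<in>{i,j}. expectation (W k))"
        by (rule indep_vars_lebesgue_integral[OF _ indW intW]) auto
      moreover have "expectation (W i) = 0" unfolding W_def using intZ[OF ij(1)] mean[OF ij(1)] by simp
      ultimately show "expectation (\<lambda>\<omega>. (Z i \<omega> \<bullet> b) * (Z j \<omega> \<bullet> b)) = 0"
        using ij(3) by (simp add: W_def)
    qed
    finally show ?thesis .
  qed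
  have "expectation (\<lambda>\<omega>. (norm (\<Sum>i\<in>I. Z i \<omega>))\<^sup>2) = expectation (\<lambda>\<omega>. \<Sum>i\<in>I. \<Sum>j\<in>I. Z i \<omega> \<bullet> Z j \<omega>)"
  proof -
    have pt: "(norm (\<Sum>i\<in>I. Z i \<omega>))\<^sup>2 = (\<Sum>i\<in>I. \<Sum>j\<in>I. Z i \<omega> \<bullet> Z j \<omega>)" for \<omega>
      by (simp only: power2_norm_eq_inner inner_sum_left inner_sum_right) (rule sum.swap)
    show ?thesis by (simp only: pt)
  qed
  also have "\<dots> = (\<Sum>i\<in>I. expectation (\<lambda>\<omega>. \<Sum>j\<in>I. Z i \<omega> \<bullet> Z j \<omega>))"
    by (rule Bochner_Integration.integral_sum) (use intZZ in auto)
  also have "\<dots> = (\<Sum>i\<in>I. \<Sum>j\<in>I. expectation (\<lambda>\<omega>. Z i \<omega> \<bullet> Z j \<omega>))"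
    by (intro sum.cong refl Bochner_Integration.integral_sum) (use intZZ in auto)
  also have "\<dots> = (\<Sum>i\<in>I. \<Sum>j\<in>I. if j = i then expectation (\<lambda>\<omega>. Z i \<omega> \<bullet> Z i \<omega>) else 0)"
    by (intro sum.cong refl) (use cross in auto)
  also have "\<dots> = (\<Sum>i\<in>I. expectation (\<lambda>\<omega>. (norm (Z i \<omega>))\<^sup>2))"
    using fin by (simp add: power2_norm_eq_inner)
  finally show ?thesis .
qed



lemma (in prob_space) norm_exp_le:
  fixes f :: "'a \<Rightarrow> 'b::euclidean_space"
  assumes "integrable M f" "\<And>\<omega>. \<omega> \<in> space M \<Longrightarrow> norm (f \<omega>) \<le> c"
  shows "norm (expectation f) \<le> c"
proof -
  have "norm (expectation f) \<le> expectation (\<lambda>\<omega>. norm (f \<omega>))" by (rule integral_norm_bound)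
  also have "\<dots> \<le> expectation (\<lambda>\<omega>. c)"
    by (rule integral_mono) (use assms in auto)
  also have "\<dots> = c" by (simp add: prob_space)
  finally show ?thesis .
qed

lemma (in prob_space) moment_bound:
  fixes Y :: "'a \<Rightarrow> 'b::euclidean_space"
  assumes [measurable]: "Y \<in> borel_measurable M"
    and nn: "(\<integral>\<^sup>+ \<omega>. ennreal (norm (Y \<omega> - x) powr \<alpha>) \<partial>M) \<le> ennreal (\<sigma> powr \<alpha>)"
  shows "integrable M (\<lambda>\<omega>. norm (Y \<omega> - x) powr \<alpha>)"
    and "expectation (\<lambda>\<omega>. norm (Y \<omega> - x) powr \<alpha>) \<le> \<sigma> powr \<alpha>"
proof -
  show int: "integrable M (\<lambda>\<omega>. norm (Y \<omega> - x) powr \<alpha>)"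
  proof (rule integrableI_bounded)
    have "(\<integral>\<^sup>+ \<omega>. ennreal (norm (norm (Y \<omega> - x) powr \<alpha>)) \<partial>M) = (\<integral>\<^sup>+ \<omega>. ennreal (norm (Y \<omega> - x) powr \<alpha>) \<partial>M)"
      by simp
    also have "\<dots> < \<infinity>" using nn by (simp add: le_less_trans)
    finally show "(\<integral>\<^sup>+ \<omega>. ennreal (norm (norm (Y \<omega> - x) powr \<alpha>)) \<partial>M) < \<infinity>" .
  qed measurable
  have "ennreal (expectation (\<lambda>\<omega>. norm (Y \<omega> - x) powr \<alpha>)) = (\<integral>\<^sup>+ \<omega>. ennreal (norm (Y \<omega> - x) powr \<alpha>) \<partial>M)"
    by (rule nn_integral_eq_integral[OF int, symmetric]) auto
  with nn have "ennreal (expectation (\<lambda>\<omega>. norm (Y \<omega> - x) powr \<alpha>)) \<le> ennreal (\<sigma> powr \<alpha>)" by simp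
  then show "expectation (\<lambda>\<omega>. norm (Y \<omega> - x) powr \<alpha>) \<le> \<sigma> powr \<alpha>"
    by (simp add: ennreal_le_iff)
qed



theorem lemmaB3:
  fixes M :: "'a measure" and X :: "nat \<Rightarrow> 'a \<Rightarrow> 'b::euclidean_space"
    and n :: nat and lam :: real and Xt :: "'a \<Rightarrow> 'b"
  assumes "prob_space M"
    and "prob_space.indep_vars M (\<lambda>_. borel) X {1..n}"
    and "lam > 0"
  defines "Xt \<equiv> (\<lambda>\<omega>. (1 / real n) *\<^sub>R (\<Sum>i=1..n. clip (X i \<omega>) lam))"
  shows "(\<forall>\<omega>\<in>space M. norm (Xt \<omega> - integral\<^sup>L M Xt) \<le> 2 * lam)
    \<and> (\<forall>(\<sigma>::real) (\<alpha>::real) (x::nat \<Rightarrow> 'b).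
         (\<sigma> \<ge> 0 \<and> 1 < \<alpha> \<and> \<alpha> \<le> 2
          \<and> (\<forall>i\<in>{1..n}. integrable M (X i) \<and> integral\<^sup>L M (X i) = x i
                \<and> (\<integral>\<^sup>+ \<omega>. ennreal (norm (X i \<omega> - x i) powr \<alpha>) \<partial>M) \<le> ennreal (\<sigma> powr \<alpha>)
                \<and> norm (x i) \<le> lam / 2))
         \<longrightarrow> (let xbar = (1 / real n) *\<^sub>R (\<Sum>i=1..n. x i) in
              norm (integral\<^sup>L M Xt - xbar) \<le> 2 powr \<alpha> * \<sigma> powr \<alpha> / lam powr (\<alpha> - 1)
              \<and> (\<integral>\<omega>. (norm (Xt \<omega> - integral\<^sup>L M Xt))\<^sup>2 \<partial>M)
                  \<le> 18 * lam powr (2 - \<alpha>) * \<sigma> powr \<alpha> / real n))"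
proof -
  interpret prob_space M by fact
  note ind = assms(2)
  note l = assms(3)
  define I where "I = {1..n}"
  have finI: "finite I" and cI: "card I = n" unfolding I_def by auto
  define Y where "Y i \<omega> = clip (X i \<omega>) lam" for i \<omega>
  have measX[measurable]: "X i \<in> borel_measurable M" if "i \<in> I" for i
    using ind that unfolding indep_vars_def I_def by auto
  have measY[measurable]: "Y i \<in> borel_measurable M" if "i \<in> I" for i
    unfolding Y_def using measurable_compose[OF measX[OF that] clip_meas] by simp
  have bndY: "norm (Y i \<omega>) \<le> lam" for i \<omega> unfolding Y_def by (rule clip_norm[OF l])
  have intY: "integrable M (Y i)" if "i \<in> I" for i
    by (rule integrable_const_bound[where B=lam]) (use bndY that in auto)
  define m where "m i = expectation (Y i)" for i
  have nm: "norm (m i) \<le> lam" if "i \<in> I" for i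
    unfolding m_def by (rule norm_exp_le[OF intY[OF that] bndY])
  have Xt: "Xt = (\<lambda>\<omega>. (1 / real n) *\<^sub>R (\<Sum>i\<in>I. Y i \<omega>))"
    unfolding Xt_def Y_def I_def by simp
  have EXt: "expectation Xt = (1 / real n) *\<^sub>R (\<Sum>i\<in>I. m i)"
    unfolding Xt m_def by (simp add: Bochner_Integration.integral_sum intY)
  have nsum: "norm ((1 / real n) *\<^sub>R (\<Sum>i\<in>I. f i)) \<le> c" if "\<And>i. i \<in> I \<Longrightarrow> norm (f i) \<le> c" "0 \<le> c"
    for f :: "nat \<Rightarrow> 'b" and c
  proof (cases "n = 0")
    case True then show ?thesis using that by simp
  next
    case False
    have "norm (\<Sum>i\<in>I. f i) \<le> (\<Sum>i\<in>I. c)"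
      by (rule order_trans[OF norm_sum sum_mono]) (use that in auto)
    also have "\<dots> = real n * c" using cI by simp
    finally have "norm (\<Sum>i\<in>I. f i) \<le> real n * c" .
    then show ?thesis using False by (simp add: field_simps)
  qed
  have nXt: "norm (Xt \<omega>) \<le> lam" for \<omega> unfolding Xt by (rule nsum) (use bndY l in auto)
  have nEXt: "norm (expectation Xt) \<le> lam" unfolding EXt by (rule nsum) (use nm l in auto)
  have part1: "\<forall>\<omega>\<in>space M. norm (Xt \<omega> - integral\<^sup>L M Xt) \<le> 2 * lam"
  proof
    fix \<omega>
    have "norm (Xt \<omega> - integral\<^sup>L M Xt) \<le> norm (Xt \<omega>) + norm (integral\<^sup>L M Xt)" by (rule norm_triangle_ineq4)
    then show "norm (Xt \<omega> - integral\<^sup>L M Xt) \<le> 2 * lam" using nXt[of \<omega>] nEXt by simp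
  qed
  show ?thesis
  proof (rule conjI[OF part1], intro allI impI)
    fix \<sigma> \<alpha> :: real and x :: "nat \<Rightarrow> 'b"
    assume H: "\<sigma> \<ge> 0 \<and> 1 < \<alpha> \<and> \<alpha> \<le> 2
          \<and> (\<forall>i\<in>{1..n}. integrable M (X i) \<and> integral\<^sup>L M (X i) = x i
                \<and> (\<integral>\<^sup>+ \<omega>. ennreal (norm (X i \<omega> - x i) powr \<alpha>) \<partial>M) \<le> ennreal (\<sigma> powr \<alpha>)
                \<and> norm (x i) \<le> lam / 2)"
    then have s0: "\<sigma> \<ge> 0" and a1: "1 < \<alpha>" and a2: "\<alpha> \<le> 2"
      and intX: "\<And>i. i \<in> I \<Longrightarrow> integrable M (X i)"
      and EX: "\<And>i. i \<in> I \<Longrightarrow> expectation (X i) = x i"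
      and mom: "\<And>i. i \<in> I \<Longrightarrow> (\<integral>\<^sup>+ \<omega>. ennreal (norm (X i \<omega> - x i) powr \<alpha>) \<partial>M) \<le> ennreal (\<sigma> powr \<alpha>)"
      and nx: "\<And>i. i \<in> I \<Longrightarrow> norm (x i) \<le> lam / 2"
      unfolding I_def by auto
    have intP: "integrable M (\<lambda>\<omega>. norm (X i \<omega> - x i) powr \<alpha>)" if "i \<in> I" for i
      by (rule moment_bound(1)[OF measX[OF that] mom[OF that]])
    have EP: "expectation (\<lambda>\<omega>. norm (X i \<omega> - x i) powr \<alpha>) \<le> \<sigma> powr \<alpha>" if "i \<in> I" for i
      by (rule moment_bound(2)[OF measX[OF that] mom[OF that]])
    define bb where "bb = 2 powr \<alpha> * \<sigma> powr \<alpha> / lam powr (\<alpha> - 1)"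
    have bias_i: "norm (m i - x i) \<le> bb" if i: "i \<in> I" for i
    proof -
      have "m i - x i = expectation (\<lambda>\<omega>. Y i \<omega> - X i \<omega>)"
        unfolding m_def using EX[OF i] intY[OF i] intX[OF i] by simp
      also have "norm \<dots> \<le> expectation (\<lambda>\<omega>. norm (Y i \<omega> - X i \<omega>))" by (rule integral_norm_bound)
      also have "\<dots> \<le> expectation (\<lambda>\<omega>. (2 / lam) powr (\<alpha> - 1) * norm (X i \<omega> - x i) powr \<alpha>)"
      proof (rule integral_mono)
        show "integrable M (\<lambda>\<omega>. norm (Y i \<omega> - X i \<omega>))" using intY[OF i] intX[OF i] by auto
        show "integrable M (\<lambda>\<omega>. (2 / lam) powr (\<alpha> - 1) * norm (X i \<omega> - x i) powr \<alpha>)"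
          using intP[OF i] by auto
        show "norm (Y i \<omega> - X i \<omega>) \<le> (2 / lam) powr (\<alpha> - 1) * norm (X i \<omega> - x i) powr \<alpha>" for \<omega>
          unfolding Y_def by (rule clip_bias[OF l nx[OF i] a1])
      qed
      also have "\<dots> = (2 / lam) powr (\<alpha> - 1) * expectation (\<lambda>\<omega>. norm (X i \<omega> - x i) powr \<alpha>)"
        by simp
      also have "\<dots> \<le> (2 / lam) powr (\<alpha> - 1) * \<sigma> powr \<alpha>"
        by (rule mult_left_mono[OF EP[OF i]]) simp
      also have "\<dots> = 2 powr (\<alpha> - 1) * \<sigma> powr \<alpha> / lam powr (\<alpha> - 1)"
        by (simp add: powr_divide)
      also have "\<dots> \<le> bb" unfolding bb_def
        by (intro divide_right_mono mult_right_mono powr_mono) auto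
      finally show ?thesis .
    qed
    have bias: "norm (integral\<^sup>L M Xt - (1 / real n) *\<^sub>R (\<Sum>i=1..n. x i)) \<le> bb"
    proof -
      have "integral\<^sup>L M Xt - (1 / real n) *\<^sub>R (\<Sum>i=1..n. x i) = (1 / real n) *\<^sub>R (\<Sum>i\<in>I. m i - x i)"
        unfolding EXt I_def by (simp add: sum_subtractf scaleR_diff_right)
      also have "norm \<dots> \<le> bb" by (rule nsum) (use bias_i in \<open>auto simp: bb_def\<close>)
      finally show ?thesis .
    qed
    show "let xbar = (1 / real n) *\<^sub>R (\<Sum>i=1..n. x i) in
              norm (integral\<^sup>L M Xt - xbar) \<le> 2 powr \<alpha> * \<sigma> powr \<alpha> / lam powr (\<alpha> - 1)
              \<and> (\<integral>\<omega>. (norm (Xt \<omega> - integral\<^sup>L M Xt))\<^sup>2 \<partial>M)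
                  \<le> 18 * lam powr (2 - \<alpha>) * \<sigma> powr \<alpha> / real n"
      unfolding Let_def
    proof (rule conjI)
      show "norm (integral\<^sup>L M Xt - (1 / real n) *\<^sub>R (\<Sum>i=1..n. x i)) \<le> 2 powr \<alpha> * \<sigma> powr \<alpha> / lam powr (\<alpha> - 1)"
        using bias unfolding bb_def .
      show "(\<integral>\<omega>. (norm (Xt \<omega> - integral\<^sup>L M Xt))\<^sup>2 \<partial>M) \<le> 18 * lam powr (2 - \<alpha>) * \<sigma> powr \<alpha> / real n"
      proof -
        note [measurable] = clip_meas
        define K where "K = lam powr (2 - \<alpha>) * \<sigma> powr \<alpha>"
        have K0: "0 \<le> K" unfolding K_def by simp
        define Z where "Z i \<omega> = Y i \<omega> - m i" for i \<omega>
        have indX: "indep_vars (\<lambda>_. borel) X I" using ind unfolding I_def .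
        have indZ: "indep_vars (\<lambda>_. borel) Z I"
          unfolding Z_def Y_def
          by (rule indep_vars_compose2[where Y="\<lambda>i v. clip v lam - m i" and X=X and N="\<lambda>_. borel", OF indX])
             measurable
        have measZ[measurable]: "Z i \<in> borel_measurable M" if "i \<in> I" for i
          unfolding Z_def using that by measurable
        have bndZ: "norm (Z i \<omega>) \<le> 2 * lam" if "i \<in> I" for i \<omega>
          unfolding Z_def using norm_triangle_ineq4[of "Y i \<omega>" "m i"] bndY[of i \<omega>] nm[OF that] by linarith
        have intZ: "integrable M (Z i)" if "i \<in> I" for i
          by (rule integrable_const_bound[where B="2 * lam"]) (use bndZ that in auto)
        have meanZ: "expectation (Z i) = 0" if "i \<in> I" for i
          unfolding Z_def m_def using intY[OF that] by (simp add: prob_space)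
        have diff: "Xt \<omega> - expectation Xt = (1 / real n) *\<^sub>R (\<Sum>i\<in>I. Z i \<omega>)" for \<omega>
          unfolding EXt unfolding Xt Z_def by (simp add: sum_subtractf scaleR_diff_right)
        have "expectation (\<lambda>\<omega>. (norm (Xt \<omega> - expectation Xt))\<^sup>2)
            = expectation (\<lambda>\<omega>. (1 / real n)\<^sup>2 * (norm (\<Sum>i\<in>I. Z i \<omega>))\<^sup>2)"
          unfolding diff by (simp only: norm_scaleR power_mult_distrib power2_abs)
        also have "\<dots> = (1 / real n)\<^sup>2 * expectation (\<lambda>\<omega>. (norm (\<Sum>i\<in>I. Z i \<omega>))\<^sup>2)"
          by simp
        also have "expectation (\<lambda>\<omega>. (norm (\<Sum>i\<in>I. Z i \<omega>))\<^sup>2) = (\<Sum>i\<in>I. expectation (\<lambda>\<omega>. (norm (Z i \<omega>))\<^sup>2))"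
          by (rule indep_sum_sq[OF finI indZ bndZ meanZ])
        also have "(\<Sum>i\<in>I. expectation (\<lambda>\<omega>. (norm (Z i \<omega>))\<^sup>2)) \<le> (\<Sum>i\<in>I. 6 * K)"
        proof (rule sum_mono)
          fix i assume i: "i \<in> I"
          define c where "c = m i - x i"
          have intZ2: "integrable M (\<lambda>\<omega>. (norm (Z i \<omega>))\<^sup>2)"
          proof (rule integrable_const_bound[where B="(2 * lam)\<^sup>2"])
            show "AE \<omega> in M. norm ((norm (Z i \<omega>))\<^sup>2) \<le> (2 * lam)\<^sup>2"
            proof (rule AE_I2)
              fix \<omega>
              have "(norm (Z i \<omega>))\<^sup>2 \<le> (2 * lam)\<^sup>2" by (rule power_mono[OF bndZ[OF i]]) simp
              then show "norm ((norm (Z i \<omega>))\<^sup>2) \<le> (2 * lam)\<^sup>2" by simp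
            qed
          qed (use i in measurable)
          have intZc: "integrable M (\<lambda>\<omega>. Z i \<omega> \<bullet> c)" using intZ[OF i] by auto
          have pt: "(norm (Y i \<omega> - x i))\<^sup>2 = (norm (Z i \<omega>))\<^sup>2 + 2 * (Z i \<omega> \<bullet> c) + (norm c)\<^sup>2" for \<omega>
          proof -
            have "Y i \<omega> - x i = Z i \<omega> + c" unfolding Z_def c_def by simp
            then show ?thesis using dot_norm[of "Z i \<omega>" c] by simp
          qed
          have "expectation (\<lambda>\<omega>. (norm (Y i \<omega> - x i))\<^sup>2)
              = expectation (\<lambda>\<omega>. (norm (Z i \<omega>))\<^sup>2 + 2 * (Z i \<omega> \<bullet> c) + (norm c)\<^sup>2)"
            by (simp only: pt)
          also have "\<dots> = expectation (\<lambda>\<omega>. (norm (Z i \<omega>))\<^sup>2) + 2 * expectation (\<lambda>\<omega>. Z i \<omega> \<bullet> c) + (norm c)\<^sup>2"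
            using intZ2 intZc by (simp add: prob_space)
          also have "expectation (\<lambda>\<omega>. Z i \<omega> \<bullet> c) = 0"
            using intZ[OF i] meanZ[OF i] by simp
          finally have "expectation (\<lambda>\<omega>. (norm (Z i \<omega>))\<^sup>2) \<le> expectation (\<lambda>\<omega>. (norm (Y i \<omega> - x i))\<^sup>2)"
            by simp
          also have "\<dots> \<le> expectation (\<lambda>\<omega>. 6 * lam powr (2 - \<alpha>) * norm (X i \<omega> - x i) powr \<alpha>)"
          proof (rule integral_mono)
            show "integrable M (\<lambda>\<omega>. (norm (Y i \<omega> - x i))\<^sup>2)"
            proof (rule integrable_const_bound[where B="(2 * lam)\<^sup>2"])
              show "AE \<omega> in M. norm ((norm (Y i \<omega> - x i))\<^sup>2) \<le> (2 * lam)\<^sup>2"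
              proof (rule AE_I2)
                fix \<omega>
                have "norm (Y i \<omega> - x i) \<le> 2 * lam"
                  using norm_triangle_ineq4[of "Y i \<omega>" "x i"] bndY[of i \<omega>] nx[OF i] l by linarith
                then have "(norm (Y i \<omega> - x i))\<^sup>2 \<le> (2 * lam)\<^sup>2" by (rule power_mono) simp
                then show "norm ((norm (Y i \<omega> - x i))\<^sup>2) \<le> (2 * lam)\<^sup>2" by simp
              qed
            qed (use i in measurable)
            show "integrable M (\<lambda>\<omega>. 6 * lam powr (2 - \<alpha>) * norm (X i \<omega> - x i) powr \<alpha>)"
              using intP[OF i] by auto
            show "(norm (Y i \<omega> - x i))\<^sup>2 \<le> 6 * lam powr (2 - \<alpha>) * norm (X i \<omega> - x i) powr \<alpha>" for \<omega>
              unfolding Y_def by (rule clip_sq[OF l nx[OF i] a1 a2])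
          qed
          also have "\<dots> = 6 * lam powr (2 - \<alpha>) * expectation (\<lambda>\<omega>. norm (X i \<omega> - x i) powr \<alpha>)"
            by simp
          also have "\<dots> \<le> 6 * lam powr (2 - \<alpha>) * \<sigma> powr \<alpha>"
            by (rule mult_left_mono[OF EP[OF i]]) simp
          finally show "expectation (\<lambda>\<omega>. (norm (Z i \<omega>))\<^sup>2) \<le> 6 * K" unfolding K_def by simp
        qed
        also have "(\<Sum>i\<in>I. 6 * K) = real n * (6 * K)" using cI by simp
        finally have "expectation (\<lambda>\<omega>. (norm (Xt \<omega> - expectation Xt))\<^sup>2) \<le> (1 / real n)\<^sup>2 * (real n * (6 * K))"
          by (simp add: mult_left_mono)
        also have "\<dots> \<le> 18 * K / real n"
        proof (cases "n = 0")
          case False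
          then have "(1 / real n)\<^sup>2 * (real n * (6 * K)) = 6 * K / real n" by (simp add: power2_eq_square field_simps)
          also have "\<dots> \<le> 18 * K / real n" using K0 by (intro divide_right_mono) auto
          finally show ?thesis .
        qed simp
        finally show ?thesis unfolding K_def by (simp add: mult.assoc)
      qed
    qed
  qed
qed


end
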